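(* Suppose Assumptions A1 and A2 hold. Then for all $k_1,k_2\in\{0,1,2,\dots\}$: 1. For $i\in\mathcal{D}$: $$\mathbb{E}\{d_i(k_1)d_i(k_2)\}=\delta(k_1-k_2)\,\alpha_i^2p_i(1-p_i)\,\mathbb{E}\{u^2(k_1-i)\}.$$ 2. For $i_1\neq i_2$ in $\mathcal{D}$: $$\mathbb{E}\{d_{i_1}(k_1)d_{i_2}(k_2)\}=-\delta(k_1-i_1-k_2+i_2)\,\alpha_{i_1}\alpha_{i_2}p_{i_1}p_{i_2}\,\mathbb{E}\{u^2(k_1-i_1)\}.$$
   Context: Setting. Fix $\bar\tau\ge1$ and $\mathcal{D}=\{0,\dots,\bar\tau\}$. A networked feedback system has a SISO discrete-time LTI plant $P$ with strictly proper transfer function and a SISO LTI controller $K$ with proper transfer function. The system is at rest at time $0$, so $u(n)=0$ and $v(n)=0$ for $n<0$. The plant input is $v(k)+u_d(k)$, where $v$ is the external input, and $u=Ky$ with $y$ the plant output. The receiver output is $$u_d(k)=\sum_{i=0}^{\bar\tau}\alpha_i\delta(\tau_{k-i}-i)u(k-i),$$ with fixed real weights $\alpha_i$ and Kronecker delta $\delta$. Assumptions. - A1: $\{\tau_n\}$ is i.i.d. on $\mathcal{D}$ with $\Pr\{\tau_n=i\}=p_i$, $\sum_ip_i=1$. Here it is indexed by all integers; negative-index delays only multiply $u(n)=0$ and do not affect the system. - A2: $\{v(k)\}$ is independent of $\{\tau_n\}$. Definitions. $\omega(k,n)=\alpha_i[\delta(\tau_n-i)-p_i]$ if $k=n+i$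 with $i\in\mathcal{D}$, and $\omega(k,n)=0$ otherwise. Set $d_i(k)=\omega(k,k-i)\,u(k-i)$ for $i\in\mathcal{D}$. *)

theory Defs
  imports "HOL-Probability.Probability"
begin

definition kdelta :: "int \<Rightarrow> real" where
  "kdelta m = (if m = 0 then 1 else 0)"

definition omega :: "(nat \<Rightarrow> real) \<Rightarrow> (nat \<Rightarrow> real) \<Rightarrow> nat \<Rightarrow> (int \<Rightarrow> 'a \<Rightarrow> nat)
    \<Rightarrow> int \<Rightarrow> int \<Rightarrow> 'a \<Rightarrow> real" where
  "omega \<alpha> p \<tau>bar \<tau> k n x =
     (if 0 \<le> k - n \<and> k - n \<le> int \<tau>bar
      then \<alpha> (nat (k - n)) * (kdelta (int (\<tau> n x) - (k - n)) - p (nat (k - n)))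
      else 0)"

definition dsig :: "(nat \<Rightarrow> real) \<Rightarrow> (nat \<Rightarrow> real) \<Rightarrow> nat \<Rightarrow> (int \<Rightarrow> 'a \<Rightarrow> nat)
    \<Rightarrow> (int \<Rightarrow> 'a \<Rightarrow> real) \<Rightarrow> nat \<Rightarrow> int \<Rightarrow> 'a \<Rightarrow> real" where
  "dsig \<alpha> p \<tau>bar \<tau> u i k x = omega \<alpha> p \<tau>bar \<tau> k (k - int i) x * u (k - int i) x"

definition gen_events :: "'a measure \<Rightarrow> ('i \<Rightarrow> 'a \<Rightarrow> 'b) \<Rightarrow> ('i \<Rightarrow> 'b measure) \<Rightarrow> 'a set set" where
  "gen_events M X N = sigma_sets (space M) (\<Union>n. {X n -` A \<inter> space M | A. A \<in> sets (N n)})"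

end

theory Submission
  imports Defs
begin

theorem lemma3p4:
  fixes M :: "'a measure" and \<tau>bar :: nat and p \<alpha> :: "nat \<Rightarrow> real"
    and \<tau> :: "int \<Rightarrow> 'a \<Rightarrow> nat" and v u y ud :: "int \<Rightarrow> 'a \<Rightarrow> real"
    and nP nK :: nat and aP bP aK bK :: "nat \<Rightarrow> real"
  assumes M: "prob_space M"
    and taubar: "\<tau>bar \<ge> 1"
    \<comment> \<open>A1: i.i.d. delays on {0..taubar} with Pr{tau_n = i} = p_i\<close>
    and tau_meas: "\<And>n. \<tau> n \<in> measurable M (count_space UNIV)"
    and tau_indep: "prob_space.indep_vars M (\<lambda>_. count_space UNIV) \<tau> UNIV"
    and tau_dist: "\<And>n i. i \<le> \<tau>bar \<Longrightarrow> measure M {x \<in> space M. \<tau> n x = i} = p i"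
    and p_sum: "(\<Sum>i\<le>\<tau>bar. p i) = 1"
    \<comment> \<open>A2: external input independent of the delay process\<close>
    and v_meas: "\<And>n. v n \<in> borel_measurable M"
    and v_indep: "prob_space.indep_set M
        (gen_events M \<tau> (\<lambda>_. count_space UNIV))
        (gen_events M v (\<lambda>_. borel))"
    and v_sq: "\<And>n. integrable M (\<lambda>x. (v n x)\<^sup>2)"
    \<comment> \<open>system at rest at time 0\<close>
    and v_rest: "\<And>n x. n < 0 \<Longrightarrow> v n x = 0"
    and u_rest: "\<And>n x. n < 0 \<Longrightarrow> u n x = 0"
    and y_rest: "\<And>n x. n < 0 \<Longrightarrow> y n x = 0"
    \<comment> \<open>receiver\<close>
    and receiver: "\<And>k x. ud k x =
        (\<Sum>i\<le>\<tau>bar. \<alpha> i * kdelta (int (\<tau> (k - int i) x) - int i) * u (k - int i) x)"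
    \<comment> \<open>strictly proper LTI plant with input v + ud\<close>
    and plant: "\<And>k x. 0 \<le> k \<Longrightarrow> y k x =
        (\<Sum>j\<in>{1..nP}. aP j * y (k - int j) x)
        + (\<Sum>j\<in>{1..nP}. bP j * (v (k - int j) x + ud (k - int j) x))"
    \<comment> \<open>proper LTI controller u = K y\<close>
    and controller: "\<And>k x. 0 \<le> k \<Longrightarrow> u k x =
        (\<Sum>j\<in>{1..nK}. aK j * u (k - int j) x)
        + (\<Sum>j\<le>nK. bK j * y (k - int j) x)"
  shows "(\<forall>(k1::nat) (k2::nat) i. i \<le> \<tau>bar \<longrightarrow>
            integral\<^sup>L M (\<lambda>x. dsig \<alpha> p \<tau>bar \<tau> u i (int k1) x * dsig \<alpha> p \<tau>bar \<tau> u i (int k2) x)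
            = kdelta (int k1 - int k2) * (\<alpha> i)\<^sup>2 * p i * (1 - p i)
              * integral\<^sup>L M (\<lambda>x. (u (int k1 - int i) x)\<^sup>2))
      \<and> (\<forall>(k1::nat) (k2::nat) i1 i2. i1 \<le> \<tau>bar \<longrightarrow> i2 \<le> \<tau>bar \<longrightarrow> i1 \<noteq> i2 \<longrightarrow>
            integral\<^sup>L M (\<lambda>x. dsig \<alpha> p \<tau>bar \<tau> u i1 (int k1) x * dsig \<alpha> p \<tau>bar \<tau> u i2 (int k2) x)
            = - kdelta (int k1 - int i1 - int k2 + int i2) * \<alpha> i1 * \<alpha> i2 * p i1 * p i2
              * integral\<^sup>L M (\<lambda>x. (u (int k1 - int i1) x)\<^sup>2))"
proof -
  interpret P: prob_space M by (rule M)
  define Tev where "Tev = (\<lambda>m. {\<tau> m -` A \<inter> space M | A. A \<in> sets (count_space (UNIV::nat set))})"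
  define V where "V = gen_events M v (\<lambda>_. borel)"
  define G where "G = (\<lambda>n::int. sigma_sets (space M) (\<Union>m\<in>{..<n}. Tev m))"
  define B0 where "B0 = (\<lambda>n. {b \<inter> c | b c. b \<in> G n \<and> c \<in> V})"
  define F where "F = (\<lambda>n. sigma (space M) (B0 n))"
  have ev_T: "Tev m \<subseteq> sets M" for m
    using tau_meas[of m] unfolding Tev_def by (auto intro: measurable_sets)
  have ev_V: "V \<subseteq> sets M"
    using P.indep_setD_ev2[OF v_indep] unfolding V_def .
  have ev_G: "G n \<subseteq> sets M" for n
    unfolding G_def using ev_T by (intro sets.sigma_sets_subset) auto
  have ev_B0: "B0 n \<subseteq> sets M" for n
    unfolding B0_def using ev_G ev_V by auto
  have B0_Pow: "B0 n \<subseteq> Pow (space M)" for n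
    using ev_B0 sets.sets_into_space by blast
  have sp_F: "space (F n) = space M" for n
    unfolding F_def using B0_Pow by (simp add: space_measure_of_conv)
  have sets_F: "sets (F n) = sigma_sets (space M) (B0 n)" for n
    unfolding F_def using B0_Pow by (simp add: sets_measure_of_conv)
  have sub_F: "sets (F n) \<subseteq> sets M" for n
    unfolding sets_F using ev_B0 by (intro sets.sigma_sets_subset) 
  have top_V: "space M \<in> V" unfolding V_def gen_events_def by (rule sigma_sets_top)
  have top_G: "space M \<in> G n" for n unfolding G_def by (rule sigma_sets_top)
  have mono_F: "sets (F n) \<subseteq> sets (F n')" if "n \<le> n'" for n n'
  proof -
    have "G n \<subseteq> G n'" unfolding G_def using that by (intro sigma_sets_mono') (auto, meson lessThan_iff order_less_le_trans)
    then have "B0 n \<subseteq> B0 n'" unfolding B0_def by blast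
    then show ?thesis unfolding sets_F by (rule sigma_sets_mono')
  qed
  have lift: "f \<in> measurable A' B'" if "f \<in> measurable A B'" "space A = space A'" "sets A \<subseteq> sets A'"
    for f :: "'a \<Rightarrow> real" and A A' :: "'a measure" and B' :: "real measure"
    using that unfolding measurable_def by auto
  have tau_F: "\<tau> m \<in> measurable (F n) (count_space UNIV)" if "m < n" for m n
  proof (rule measurableI)
    fix A :: "nat set"
    have "\<tau> m -` A \<inter> space M \<in> Tev m" unfolding Tev_def by auto
    then have "\<tau> m -` A \<inter> space M \<in> G n" unfolding G_def using that by auto
    then have "(\<tau> m -` A \<inter> space M) \<inter> space M \<in> B0 n" unfolding B0_def using top_V by blast
    then show "\<tau> m -` A \<inter> space (F n) \<in> sets (F n)" unfolding sets_F sp_F by auto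
  qed auto
  have v_F: "v m \<in> borel_measurable (F n)" for m n
  proof (rule measurableI)
    fix A :: "real set" assume "A \<in> sets borel"
    then have "v m -` A \<inter> space M \<in> V" unfolding V_def gen_events_def by (intro sigma_sets.Basic) blast
    then have "space M \<inter> (v m -` A \<inter> space M) \<in> B0 n" unfolding B0_def using top_G by blast
    moreover have "space M \<inter> (v m -` A \<inter> space M) = v m -` A \<inter> space M" by blast
    ultimately show "v m -` A \<inter> space (F n) \<in> sets (F n)" unfolding sets_F sp_F by (metis sigma_sets.Basic)
  qed auto

  have Tev_stable: "Int_stable (Tev m)" for m
    unfolding Int_stable_def Tev_def
    apply auto
    apply (rule_tac x="A \<inter> Aa" in exI)
    apply auto
    done
  have tau_sets: "P.indep_sets Tev UNIV"
    using tau_indep unfolding P.indep_vars_def2 Tev_def by auto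
  have Pow_T: "(\<Union>m\<in>S. Tev m) \<subseteq> Pow (space M)" for S
    using ev_T sets.sets_into_space by blast
  have sa_G: "sigma_algebra (space M) (G n)" for n
    unfolding G_def using Pow_T by (rule sigma_algebra_sigma_sets)
  have sa_V: "sigma_algebra (space M) V"
    unfolding V_def gen_events_def by (intro sigma_algebra_sigma_sets) auto
  have sa_Int: "a \<inter> b \<in> A" if "sigma_algebra \<Omega> A" "a \<in> A" "b \<in> A" for \<Omega> a b :: "'a set" and A
  proof -
    interpret S: sigma_algebra \<Omega> A by fact
    show ?thesis using that(2,3) by (rule S.Int)
  qed
  define Tall where "Tall = gen_events M \<tau> (\<lambda>_. count_space UNIV)"
  have Tall_eq: "Tall = sigma_sets (space M) (\<Union>m. Tev m)"
    unfolding Tall_def gen_events_def Tev_def by simp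
  have sa_Tall: "sigma_algebra (space M) Tall"
    unfolding Tall_eq using Pow_T by (rule sigma_algebra_sigma_sets)
  have TG: "P.prob (a \<inter> b) = P.prob a * P.prob b" if a: "a \<in> Tev n" and b: "b \<in> G n" for a b n
  proof -
    let ?I = "\<lambda>j::bool. if j then {n} else {..<n}"
    have "P.indep_sets Tev (\<Union>j\<in>UNIV. ?I j)"
      by (rule P.indep_sets_mono_index[OF _ tau_sets]) auto
    then have c: "P.indep_sets (\<lambda>j. sigma_sets (space M) (\<Union>i\<in>?I j. Tev i)) UNIV"
      by (rule P.indep_sets_collect_sigma) (auto simp: Tev_stable disjoint_family_on_def)
    have "P.prob (\<Inter>j\<in>UNIV. (\<lambda>j. if j then a else b) j) = (\<Prod>j\<in>UNIV. P.prob ((\<lambda>j. if j then a else b) j))"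
    proof (rule P.indep_setsD[OF c])
      show "\<forall>j\<in>UNIV. (if j then a else b) \<in> sigma_sets (space M) (\<Union>i\<in>?I j. Tev i)"
      proof
        fix j :: bool
        show "(if j then a else b) \<in> sigma_sets (space M) (\<Union>i\<in>?I j. Tev i)"
        proof (cases j)
          case True then show ?thesis using a by (simp add: sigma_sets.Basic)
        next
          case False then show ?thesis using b by (simp add: G_def)
        qed
      qed
    qed simp_all
    then show ?thesis by (simp add: UNIV_bool Int_commute)
  qed
  have indep0: "P.indep_set (Tev n) (B0 n)" for n
  proof (rule P.indep_setI)
    show "Tev n \<subseteq> P.events" by (rule ev_T)
    show "B0 n \<subseteq> P.events" by (rule ev_B0)
    fix a d assume a: "a \<in> Tev n" and d: "d \<in> B0 n"
    then obtain b c where d_eq: "d = b \<inter> c" and b: "b \<in> G n" and c: "c \<in> V" unfolding B0_def by auto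
    have aT: "a \<in> Tall" unfolding Tall_eq using a by auto
    have "G n \<subseteq> Tall" unfolding G_def Tall_eq by (rule sigma_sets_mono') auto
    then have bT: "b \<in> Tall" using b by blast
    have abT: "a \<inter> b \<in> Tall" using sa_Int[OF sa_Tall aT bT] .
    have vi: "P.indep_set Tall V" using v_indep unfolding Tall_def V_def .
    have "P.prob (a \<inter> d) = P.prob ((a \<inter> b) \<inter> c)" by (simp add: d_eq Int_assoc)
    also have "\<dots> = P.prob (a \<inter> b) * P.prob c" by (rule P.indep_setD[OF vi abT c])
    also have "\<dots> = P.prob a * P.prob b * P.prob c" using TG[OF a b] by simp
    also have "\<dots> = P.prob a * P.prob d" using P.indep_setD[OF vi bT c] d_eq by simp
    finally show "P.prob (a \<inter> d) = P.prob a * P.prob d" .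
  qed
  have B0_stable: "Int_stable (B0 n)" for n
  proof (rule Int_stableI)
    fix d1 d2 assume "d1 \<in> B0 n" "d2 \<in> B0 n"
    then obtain b1 c1 b2 c2 where e: "d1 = b1 \<inter> c1" "d2 = b2 \<inter> c2" and h: "b1 \<in> G n" "b2 \<in> G n" "c1 \<in> V" "c2 \<in> V"
      unfolding B0_def by auto
    have 1: "b1 \<inter> b2 \<in> G n" by (rule sa_Int[OF sa_G h(1,2)])
    have 2: "c1 \<inter> c2 \<in> V" by (rule sa_Int[OF sa_V h(3,4)])
    have "d1 \<inter> d2 = (b1 \<inter> b2) \<inter> (c1 \<inter> c2)" using e by blast
    then show "d1 \<inter> d2 \<in> B0 n" unfolding B0_def using 1 2 by blast
  qed
  have indepF: "P.indep_set (sigma_sets (space M) (Tev n)) (sets (F n))" for n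
    unfolding sets_F by (rule P.indep_set_sigma_sets[OF indep0 Tev_stable B0_stable])

  define L2 where "L2 = (\<lambda>n (f::'a \<Rightarrow> real). f \<in> borel_measurable (F n) \<and> integrable M (\<lambda>x. (f x)\<^sup>2))"
  have FM: "f \<in> borel_measurable M" if "f \<in> borel_measurable (F n)" for f :: "'a \<Rightarrow> real" and n
    using lift[of f "F n" borel M] that sp_F sub_F by blast
  have L2_meas: "f \<in> borel_measurable M" if "L2 n f" for f n
    using that FM unfolding L2_def by blast
  have L2_mono: "L2 n' f" if "n \<le> n'" "L2 n f" for n n' f
  proof -
    have m: "f \<in> borel_measurable (F n)" and i: "integrable M (\<lambda>x. (f x)\<^sup>2)"
      using that(2) unfolding L2_def by auto
    have "f \<in> borel_measurable (F n')" using lift[OF m _ mono_F[OF that(1)]] sp_F by simp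
    then show ?thesis using i unfolding L2_def by simp
  qed
  have L2_zero: "L2 n (\<lambda>x. 0)" for n unfolding L2_def by simp
  have sq_ineq: "(a + b)\<^sup>2 \<le> 2 * a\<^sup>2 + 2 * b\<^sup>2" for a b :: real
  proof -
    have "0 \<le> (a - b)\<^sup>2" by simp
    then show ?thesis by (simp add: power2_eq_square algebra_simps)
  qed
  have L2_add: "L2 n (\<lambda>x. f x + g x)" if "L2 n f" "L2 n g" for n f g
  proof -
    have m: "f \<in> borel_measurable (F n)" "g \<in> borel_measurable (F n)" using that unfolding L2_def by auto
    have i: "integrable M (\<lambda>x. 2 * (f x)\<^sup>2 + 2 * (g x)\<^sup>2)" using that unfolding L2_def by auto
    have "integrable M (\<lambda>x. (f x + g x)\<^sup>2)"
    proof (rule Bochner_Integration.integrable_bound[OF i])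
      show "(\<lambda>x. (f x + g x)\<^sup>2) \<in> borel_measurable M" by (intro borel_measurable_add borel_measurable_times borel_measurable_power borel_measurable_diff borel_measurable_const FM[OF m(1)] FM[OF m(2)])
      show "AE x in M. norm ((f x + g x)\<^sup>2) \<le> norm (2 * (f x)\<^sup>2 + 2 * (g x)\<^sup>2)"
        using sq_ineq by auto
    qed
    then show ?thesis using m unfolding L2_def by auto
  qed
  have L2_sum: "L2 n (\<lambda>x. \<Sum>j\<in>A. f j x)" if "finite A" "\<And>j. j \<in> A \<Longrightarrow> L2 n (f j)" for n f and A :: "nat set"
    using that
  proof (induction A rule: finite_induct)
    case empty then show ?case using L2_zero by simp
  next
    case (insert a A) then show ?case using L2_add[of n "f a" "\<lambda>x. \<Sum>j\<in>A. f j x"] by simp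
  qed
  have L2_bmult: "L2 n (\<lambda>x. h x * f x)" if "h \<in> borel_measurable (F n)" "\<And>x. \<bar>h x\<bar> \<le> B" "L2 n f" for n h f B
  proof -
    have m: "f \<in> borel_measurable (F n)" using that unfolding L2_def by auto
    have i: "integrable M (\<lambda>x. B\<^sup>2 * (f x)\<^sup>2)" using that unfolding L2_def by auto
    have "integrable M (\<lambda>x. (h x * f x)\<^sup>2)"
    proof (rule Bochner_Integration.integrable_bound[OF i])
      show "(\<lambda>x. (h x * f x)\<^sup>2) \<in> borel_measurable M" by (intro borel_measurable_add borel_measurable_times borel_measurable_power borel_measurable_diff borel_measurable_const FM[OF m] FM[OF that(1)])
      have "(h x * f x)\<^sup>2 \<le> B\<^sup>2 * (f x)\<^sup>2" for x
      proof -
        have "(h x)\<^sup>2 \<le> B\<^sup>2" using that(2)[of x] by (metis abs_le_square_iff abs_of_nonneg abs_ge_zero order_trans power2_abs)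
        then show ?thesis by (simp add: power_mult_distrib mult_right_mono)
      qed
      then show "AE x in M. norm ((h x * f x)\<^sup>2) \<le> norm (B\<^sup>2 * (f x)\<^sup>2)" by auto
    qed
    then show ?thesis using m that(1) unfolding L2_def by auto
  qed
  have L2_cmult: "L2 n (\<lambda>x. c * f x)" if "L2 n f" for n f c
    using L2_bmult[of "\<lambda>_. c" n "\<bar>c\<bar>" f] that by simp
  have L2_v: "L2 n (v m)" for n m unfolding L2_def using v_F v_sq by auto
  have kd_F: "(\<lambda>x. kdelta (int (\<tau> m x) - int i)) \<in> borel_measurable (F n)" if "m < n" for m n i
    using measurable_compose[OF tau_F[OF that], of "\<lambda>t. kdelta (int t - int i)" borel] by simp
  have kd_abs: "\<bar>kdelta z\<bar> \<le> 1" for z unfolding kdelta_def by simp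

  have yu_all: "\<forall>k. k < int N \<longrightarrow> L2 k (y k) \<and> L2 k (u k)" for N :: nat
  proof (induction N)
    case 0
    show ?case
    proof (intro allI impI)
      fix k :: int assume "k < int 0"
      then have "y k = (\<lambda>x. 0)" "u k = (\<lambda>x. 0)" using y_rest u_rest by auto
      then show "L2 k (y k) \<and> L2 k (u k)" using L2_zero by simp
    qed
  next
    case (Suc N)
    define k where "k = int N"
    have IH: "L2 k (y (k - int j)) \<and> L2 k (u (k - int j))" if "j \<ge> 1" for j
      using Suc.IH that L2_mono[of "k - int j" k] unfolding k_def by auto
    have ud_L2: "L2 k (ud (k - int j))" if "j \<ge> 1" for j
    proof -
      have "ud (k - int j) = (\<lambda>x. \<Sum>i\<le>\<tau>bar. (\<alpha> i * kdelta (int (\<tau> (k - int j - int i) x) - int i)) * u (k - int j - int i) x)" (is "_ = ?R")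
        using receiver by (intro ext) simp
      moreover have "L2 k ?R"
      proof (rule L2_sum)
        fix i assume "i \<in> {..\<tau>bar}"
        have "L2 k (u (k - int (j + i)))" using IH[of "j + i"] that by auto
        then have uL: "L2 k (u (k - int j - int i))" by (simp add: algebra_simps)
        have hm: "(\<lambda>x. \<alpha> i * kdelta (int (\<tau> (k - int j - int i) x) - int i)) \<in> borel_measurable (F k)"
          using that by (intro borel_measurable_add borel_measurable_times borel_measurable_power borel_measurable_diff borel_measurable_const kd_F) auto
        have hb: "\<bar>\<alpha> i * kdelta (int (\<tau> (k - int j - int i) x) - int i)\<bar> \<le> \<bar>\<alpha> i\<bar>" for x
          using kd_abs by (simp add: abs_mult mult_left_le)
        show "L2 k (\<lambda>x. (\<alpha> i * kdelta (int (\<tau> (k - int j - int i) x) - int i)) * u (k - int j - int i) x)"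
          by (rule L2_bmult[OF hm hb uL])
      qed simp
      ultimately show ?thesis by simp
    qed
    have yk: "L2 k (y k)"
    proof -
      have "y k = (\<lambda>x. (\<Sum>j\<in>{1..nP}. aP j * y (k - int j) x) + (\<Sum>j\<in>{1..nP}. bP j * (v (k - int j) x + ud (k - int j) x)))" (is "_ = ?R")
        using plant k_def by (intro ext) simp
      moreover have "L2 k ?R"
        by (intro L2_add L2_sum L2_cmult) (use IH L2_v ud_L2 in auto)
      ultimately show ?thesis by simp
    qed
    have uk: "L2 k (u k)"
    proof -
      have "u k = (\<lambda>x. (\<Sum>j\<in>{1..nK}. aK j * u (k - int j) x) + (\<Sum>j\<le>nK. bK j * y (k - int j) x))" (is "_ = ?R")
        using controller k_def by (intro ext) simp
      moreover have "L2 k ?R"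
      proof (intro L2_add L2_sum L2_cmult)
        fix j assume "j \<in> {..nK}"
        show "L2 k (y (k - int j))"
        proof (cases "j = 0")
          case True then show ?thesis using yk by simp
        next
          case False then show ?thesis using IH[of j] by auto
        qed
      qed (use IH in auto)
      ultimately show ?thesis by simp
    qed
    show ?case
    proof (intro allI impI)
      fix k' :: int assume "k' < int (Suc N)"
      then have "k' < k \<or> k' = k" unfolding k_def by auto
      then show "L2 k' (y k') \<and> L2 k' (u k')" using Suc.IH yk uk unfolding k_def by auto
    qed
  qed
  have uL2: "L2 k (u k)" for k
    using yu_all[of "nat k + 1"] by auto

  have K: "integral\<^sup>L M (\<lambda>x. h (\<tau> n x) * Y x) = integral\<^sup>L M (\<lambda>x. h (\<tau> n x)) * integral\<^sup>L M Y"
    if Ym: "Y \<in> borel_measurable (F n)" and Yi: "integrable M Y" and hb: "\<And>t. \<bar>h t\<bar> \<le> B"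
    for h :: "nat \<Rightarrow> real" and Y :: "'a \<Rightarrow> real" and n B
  proof -
    have X: "(\<lambda>x. h (\<tau> n x)) \<in> borel_measurable M"
      using measurable_compose[OF tau_meas[of n], of h borel] by simp
    have Xi: "integrable M (\<lambda>x. h (\<tau> n x))"
      by (rule P.integrable_const_bound[where B=B]) (use hb X in auto)
    have YM: "Y \<in> borel_measurable M" using FM Ym by blast
    have s1: "sigma_sets (space M) {(\<lambda>x. h (\<tau> n x)) -` A \<inter> space M |A. A \<in> sets borel} \<subseteq> sigma_sets (space M) (Tev n)"
    proof (rule sigma_sets_mono', rule subsetI)
      fix s assume "s \<in> {(\<lambda>x. h (\<tau> n x)) -` A \<inter> space M |A. A \<in> sets borel}"
      then obtain A where "s = (\<lambda>x. h (\<tau> n x)) -` A \<inter> space M" by auto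
      then have "s = \<tau> n -` (h -` A) \<inter> space M" by auto
      then show "s \<in> Tev n" unfolding Tev_def by auto
    qed
    have s2a: "{Y -` A \<inter> space M |A. A \<in> sets borel} \<subseteq> sets (F n)"
      using measurable_sets[OF Ym] sp_F by auto
    have "sigma_sets (space (F n)) {Y -` A \<inter> space M |A. A \<in> sets borel} \<subseteq> sets (F n)"
      by (rule sets.sigma_sets_subset[OF s2a])
    then have s2: "sigma_sets (space M) {Y -` A \<inter> space M |A. A \<in> sets borel} \<subseteq> sets (F n)"
      by (simp only: sp_F)
    have "P.indep_var borel (\<lambda>x. h (\<tau> n x)) borel Y"
      unfolding P.indep_var_eq
    proof (intro conjI)
      show "P.random_variable borel (\<lambda>x. h (\<tau> n x))" using X by simp
      show "P.random_variable borel Y" using YM by simp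
      show "P.indep_set (sigma_sets (space M) {(\<lambda>x. h (\<tau> n x)) -` A \<inter> space M |A. A \<in> sets borel})
          (sigma_sets (space M) {Y -` A \<inter> space M |A. A \<in> sets borel})"
      proof -
        have I: "sigma_sets (space M) (Tev n) \<subseteq> P.events" "sets (F n) \<subseteq> P.events"
          "\<And>a b. a \<in> sigma_sets (space M) (Tev n) \<Longrightarrow> b \<in> sets (F n) \<Longrightarrow> P.prob (a \<inter> b) = P.prob a * P.prob b"
          using indepF[of n] unfolding P.indep_sets2_eq by auto
        show ?thesis unfolding P.indep_sets2_eq
        proof (intro conjI ballI)
          show "sigma_sets (space M) {(\<lambda>x. h (\<tau> n x)) -` A \<inter> space M |A. A \<in> sets borel} \<subseteq> P.events"
            using s1 I(1) by (rule subset_trans)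
          show "sigma_sets (space M) {Y -` A \<inter> space M |A. A \<in> sets borel} \<subseteq> P.events"
            using s2 I(2) by (rule subset_trans)
          fix a b assume "a \<in> sigma_sets (space M) {(\<lambda>x. h (\<tau> n x)) -` A \<inter> space M |A. A \<in> sets borel}"
            "b \<in> sigma_sets (space M) {Y -` A \<inter> space M |A. A \<in> sets borel}"
          then show "P.prob (a \<inter> b) = P.prob a * P.prob b" using s1 s2 I(3) by blast
        qed
      qed
    qed
    then show ?thesis by (rule P.indep_var_lebesgue_integral[OF _ Xi Yi])
  qed
  define e where "e = (\<lambda>i n x. kdelta (int (\<tau> n x) - int i) - p i)"
  have kdM: "(\<lambda>x. kdelta (int (\<tau> n x) - int i)) \<in> borel_measurable M" for n i
    using measurable_compose[OF tau_meas[of n], of "\<lambda>t. kdelta (int t - int i)" borel] by simp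
  have kdI: "integrable M (\<lambda>x. kdelta (int (\<tau> n x) - int i))" for n i
    by (rule P.integrable_const_bound[where B=1]) (use kdM kd_abs in auto)
  have Ekd: "integral\<^sup>L M (\<lambda>x. kdelta (int (\<tau> n x) - int i)) = p i" if "i \<le> \<tau>bar" for n i
  proof -
    have "(\<lambda>x. kdelta (int (\<tau> n x) - int i)) = indicator {x. \<tau> n x = i}"
      by (auto simp: kdelta_def indicator_def fun_eq_iff)
    then have "integral\<^sup>L M (\<lambda>x. kdelta (int (\<tau> n x) - int i)) = measure M ({x. \<tau> n x = i} \<inter> space M)"
      by simp
    also have "{x. \<tau> n x = i} \<inter> space M = {x \<in> space M. \<tau> n x = i}" by auto
    finally show ?thesis using tau_dist[OF that] by simp
  qed
  have e_bound: "\<bar>kdelta (int t - int i) - p i\<bar> \<le> 1 + \<bar>p i\<bar>" for t i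
    using kd_abs[of "int t - int i"] by linarith
  have Ee: "integral\<^sup>L M (\<lambda>x. kdelta (int (\<tau> n x) - int i) - p i) = 0" if "i \<le> \<tau>bar" for n i
    using Ekd[OF that, of n] kdI[of n i] by (simp add: P.prob_space)
  have Eee: "integral\<^sup>L M (\<lambda>x. (kdelta (int (\<tau> n x) - int i1) - p i1) * (kdelta (int (\<tau> n x) - int i2) - p i2))
      = (if i1 = i2 then p i1 - (p i1)\<^sup>2 else - (p i1 * p i2))" if "i1 \<le> \<tau>bar" "i2 \<le> \<tau>bar" for n i1 i2
  proof (cases "i1 = i2")
    case True
    have "(\<lambda>x. (kdelta (int (\<tau> n x) - int i1) - p i1) * (kdelta (int (\<tau> n x) - int i2) - p i2))
        = (\<lambda>x. (1 - 2 * p i1) * kdelta (int (\<tau> n x) - int i1) + (p i1)\<^sup>2)"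
      using True by (auto simp: fun_eq_iff kdelta_def algebra_simps power2_eq_square)
    then show ?thesis using True Ekd[OF that(1), of n] kdI[of n i1]
      by (simp add: algebra_simps power2_eq_square P.prob_space)
  next
    case False
    have "(\<lambda>x. (kdelta (int (\<tau> n x) - int i1) - p i1) * (kdelta (int (\<tau> n x) - int i2) - p i2))
        = (\<lambda>x. (- p i2 * kdelta (int (\<tau> n x) - int i1) - p i1 * kdelta (int (\<tau> n x) - int i2)) + p i1 * p i2)"
      using False by (auto simp: fun_eq_iff kdelta_def algebra_simps)
    then show ?thesis using False Ekd[OF that(1), of n] Ekd[OF that(2), of n] kdI[of n i1] kdI[of n i2]
      by (simp add: algebra_simps P.prob_space)
  qed

  have uM: "u n \<in> borel_measurable M" for n using L2_meas[OF uL2] .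
  have int_prod: "integrable M (\<lambda>x. u n x * u m x)" for n m
  proof (rule Bochner_Integration.integrable_bound)
    show "integrable M (\<lambda>x. (u n x)\<^sup>2 + (u m x)\<^sup>2)" using uL2[of n] uL2[of m] unfolding L2_def by auto
    show "(\<lambda>x. u n x * u m x) \<in> borel_measurable M" by (intro borel_measurable_add borel_measurable_times borel_measurable_power borel_measurable_diff borel_measurable_const uM)
    have "\<bar>a * b\<bar> \<le> a\<^sup>2 + b\<^sup>2" for a b :: real
    proof -
      have "0 \<le> (\<bar>a\<bar> - \<bar>b\<bar>)\<^sup>2" by simp
      then have "2 * (\<bar>a\<bar> * \<bar>b\<bar>) \<le> a\<^sup>2 + b\<^sup>2" by (simp add: power2_eq_square algebra_simps)
      moreover have "0 \<le> \<bar>a\<bar> * \<bar>b\<bar>" by simp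
      ultimately show ?thesis unfolding abs_mult by linarith
    qed
    then show "AE x in M. norm (u n x * u m x) \<le> norm ((u n x)\<^sup>2 + (u m x)\<^sup>2)" by auto
  qed
  have int_bmult: "integrable M (\<lambda>x. g x * w x)"
    if "g \<in> borel_measurable M" "\<And>x. \<bar>g x\<bar> \<le> C" "integrable M w" "w \<in> borel_measurable M"
    for g w :: "'a \<Rightarrow> real" and C
  proof (rule Bochner_Integration.integrable_bound)
    show "integrable M (\<lambda>x. C * \<bar>w x\<bar>)" using that(3) by auto
    show "(\<lambda>x. g x * w x) \<in> borel_measurable M" by (intro borel_measurable_add borel_measurable_times borel_measurable_power borel_measurable_diff borel_measurable_const that(1) that(4))
    have "\<bar>g x * w x\<bar> \<le> \<bar>C * \<bar>w x\<bar>\<bar>" for x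
      using mult_right_mono[OF that(2)[of x] abs_ge_zero[of "w x"]] mult_right_mono[OF abs_ge_self[of C] abs_ge_zero[of "w x"]]
      unfolding abs_mult abs_abs by linarith
    then show "AE x in M. norm (g x * w x) \<le> norm (C * \<bar>w x\<bar>)" by auto
  qed
  have Z: "integral\<^sup>L M (\<lambda>x. (\<alpha> i1 * e i1 n1 x * u n1 x) * (\<alpha> i2 * e i2 n2 x * u n2 x)) = 0"
    if n: "n1 < n2" and i: "i1 \<le> \<tau>bar" "i2 \<le> \<tau>bar" for n1 n2 i1 i2
  proof -
    define g where "g = (\<lambda>x. \<alpha> i1 * (kdelta (int (\<tau> n1 x) - int i1) - p i1) * \<alpha> i2)"
    define Y where "Y = (\<lambda>x. g x * (u n1 x * u n2 x))"
    have gF: "g \<in> borel_measurable (F n2)" unfolding g_def by (intro borel_measurable_add borel_measurable_times borel_measurable_power borel_measurable_diff borel_measurable_const kd_F[OF n])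
    have u1F: "u n1 \<in> borel_measurable (F n2)" using L2_mono[of n1 n2, OF _ uL2] n unfolding L2_def by auto
    have u2F: "u n2 \<in> borel_measurable (F n2)" using uL2[of n2] unfolding L2_def by auto
    have YF: "Y \<in> borel_measurable (F n2)" unfolding Y_def by (intro borel_measurable_add borel_measurable_times borel_measurable_power borel_measurable_diff borel_measurable_const gF u1F u2F)
    have gb: "\<bar>g x\<bar> \<le> \<bar>\<alpha> i1\<bar> * (1 + \<bar>p i1\<bar>) * \<bar>\<alpha> i2\<bar>" for x
      unfolding g_def abs_mult
      by (intro mult_right_mono mult_left_mono e_bound) auto
    have YI: "integrable M Y" unfolding Y_def
      by (rule int_bmult[OF FM[OF gF] gb int_prod]) (intro borel_measurable_add borel_measurable_times borel_measurable_power borel_measurable_diff borel_measurable_const uM)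
    have "integral\<^sup>L M (\<lambda>x. (\<alpha> i1 * e i1 n1 x * u n1 x) * (\<alpha> i2 * e i2 n2 x * u n2 x))
        = integral\<^sup>L M (\<lambda>x. (kdelta (int (\<tau> n2 x) - int i2) - p i2) * Y x)"
      by (rule Bochner_Integration.integral_cong) (auto simp: Y_def g_def e_def algebra_simps)
    also have "\<dots> = integral\<^sup>L M (\<lambda>x. kdelta (int (\<tau> n2 x) - int i2) - p i2) * integral\<^sup>L M Y"
      by (rule K[OF YF YI e_bound])
    also have "\<dots> = 0" using Ee[OF i(2)] by simp
    finally show ?thesis .
  qed
  have S: "integral\<^sup>L M (\<lambda>x. (\<alpha> i1 * e i1 n x * u n x) * (\<alpha> i2 * e i2 n x * u n x))
      = \<alpha> i1 * \<alpha> i2 * (if i1 = i2 then p i1 - (p i1)\<^sup>2 else - (p i1 * p i2)) * integral\<^sup>L M (\<lambda>x. (u n x)\<^sup>2)"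
    if i: "i1 \<le> \<tau>bar" "i2 \<le> \<tau>bar" for n i1 i2
  proof -
    define Y where "Y = (\<lambda>x. \<alpha> i1 * \<alpha> i2 * (u n x)\<^sup>2)"
    have uF: "u n \<in> borel_measurable (F n)" using uL2[of n] unfolding L2_def by auto
    have YF: "Y \<in> borel_measurable (F n)" unfolding Y_def by (intro borel_measurable_add borel_measurable_times borel_measurable_power borel_measurable_diff borel_measurable_const uF)
    have YI: "integrable M Y" unfolding Y_def using uL2[of n] unfolding L2_def by auto
    have hb: "\<bar>(kdelta (int t - int i1) - p i1) * (kdelta (int t - int i2) - p i2)\<bar> \<le> (1 + \<bar>p i1\<bar>) * (1 + \<bar>p i2\<bar>)" for t
      unfolding abs_mult by (intro mult_mono e_bound) auto
    have "integral\<^sup>L M (\<lambda>x. (\<alpha> i1 * e i1 n x * u n x) * (\<alpha> i2 * e i2 n x * u n x))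
        = integral\<^sup>L M (\<lambda>x. ((kdelta (int (\<tau> n x) - int i1) - p i1) * (kdelta (int (\<tau> n x) - int i2) - p i2)) * Y x)"
      by (rule Bochner_Integration.integral_cong) (auto simp: Y_def e_def algebra_simps power2_eq_square)
    also have "\<dots> = integral\<^sup>L M (\<lambda>x. (kdelta (int (\<tau> n x) - int i1) - p i1) * (kdelta (int (\<tau> n x) - int i2) - p i2)) * integral\<^sup>L M Y"
      by (rule K[OF YF YI hb])
    also have "\<dots> = (if i1 = i2 then p i1 - (p i1)\<^sup>2 else - (p i1 * p i2)) * (\<alpha> i1 * \<alpha> i2 * integral\<^sup>L M (\<lambda>x. (u n x)\<^sup>2))"
      unfolding Eee[OF i] Y_def by simp
    finally show ?thesis by (simp add: algebra_simps)
  qed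
  have dsig_eq: "dsig \<alpha> p \<tau>bar \<tau> u i k x = \<alpha> i * e i (k - int i) x * u (k - int i) x" if "i \<le> \<tau>bar" for i k x
    using that unfolding dsig_def omega_def e_def by simp

  have swap: "integral\<^sup>L M (\<lambda>x. A x * B x) = integral\<^sup>L M (\<lambda>x. B x * A x)" for A B :: "'a \<Rightarrow> real"
    by (simp add: mult.commute)
  show ?thesis
  proof (intro conjI allI impI)
    fix k1 k2 :: nat and i assume i: "i \<le> \<tau>bar"
    define n1 where "n1 = int k1 - int i"
    define n2 where "n2 = int k2 - int i"
    have eq: "(\<lambda>x. dsig \<alpha> p \<tau>bar \<tau> u i (int k1) x * dsig \<alpha> p \<tau>bar \<tau> u i (int k2) x)
        = (\<lambda>x. (\<alpha> i * e i n1 x * u n1 x) * (\<alpha> i * e i n2 x * u n2 x))"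
      by (simp add: dsig_eq[OF i] n1_def n2_def)
    consider "k1 = k2" | "k1 < k2" | "k2 < k1" by linarith
    then show "integral\<^sup>L M (\<lambda>x. dsig \<alpha> p \<tau>bar \<tau> u i (int k1) x * dsig \<alpha> p \<tau>bar \<tau> u i (int k2) x)
            = kdelta (int k1 - int k2) * (\<alpha> i)\<^sup>2 * p i * (1 - p i)
              * integral\<^sup>L M (\<lambda>x. (u (int k1 - int i) x)\<^sup>2)"
    proof cases
      case 1
      then have n21: "n2 = n1" unfolding n1_def n2_def by simp
      define I where "I = integral\<^sup>L M (\<lambda>x. (u n1 x)\<^sup>2)"
      have I': "integral\<^sup>L M (\<lambda>x. (u (int k1 - int i) x)\<^sup>2) = I" unfolding I_def n1_def ..
      have L: "integral\<^sup>L M (\<lambda>x. (\<alpha> i * e i n1 x * u n1 x) * (\<alpha> i * e i n1 x * u n1 x)) = \<alpha> i * \<alpha> i * (p i - (p i)\<^sup>2) * I"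
        using S[OF i i, of n1] unfolding I_def by simp
      have kd1: "kdelta (int k1 - int k2) = 1" using 1 by (simp add: kdelta_def)
      show ?thesis unfolding eq n21 L I' kd1 by (simp add: power2_eq_square algebra_simps)
    next
      case 2
      then have "n1 < n2" unfolding n1_def n2_def by simp
      then show ?thesis unfolding eq using Z[OF _ i i] 2 by (simp add: kdelta_def)
    next
      case 3
      then have "n2 < n1" unfolding n1_def n2_def by simp
      then show ?thesis unfolding eq using Z[OF _ i i, of n2 n1] 3 swap[of "\<lambda>x. \<alpha> i * e i n1 x * u n1 x" "\<lambda>x. \<alpha> i * e i n2 x * u n2 x"] by (simp add: kdelta_def)
    qed
  next
    fix k1 k2 :: nat and i1 i2 assume i1: "i1 \<le> \<tau>bar" and i2: "i2 \<le> \<tau>bar" and ne: "i1 \<noteq> i2"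
    define n1 where "n1 = int k1 - int i1"
    define n2 where "n2 = int k2 - int i2"
    have eq: "(\<lambda>x. dsig \<alpha> p \<tau>bar \<tau> u i1 (int k1) x * dsig \<alpha> p \<tau>bar \<tau> u i2 (int k2) x)
        = (\<lambda>x. (\<alpha> i1 * e i1 n1 x * u n1 x) * (\<alpha> i2 * e i2 n2 x * u n2 x))"
      by (simp add: dsig_eq[OF i1] dsig_eq[OF i2] n1_def n2_def)
    have kd: "kdelta (int k1 - int i1 - int k2 + int i2) = kdelta (n1 - n2)"
      unfolding n1_def n2_def by (simp add: algebra_simps)
    consider "n1 = n2" | "n1 < n2" | "n2 < n1" by linarith
    then show "integral\<^sup>L M (\<lambda>x. dsig \<alpha> p \<tau>bar \<tau> u i1 (int k1) x * dsig \<alpha> p \<tau>bar \<tau> u i2 (int k2) x)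
            = - kdelta (int k1 - int i1 - int k2 + int i2) * \<alpha> i1 * \<alpha> i2 * p i1 * p i2
              * integral\<^sup>L M (\<lambda>x. (u (int k1 - int i1) x)\<^sup>2)"
    proof cases
      case 1
      define I where "I = integral\<^sup>L M (\<lambda>x. (u n1 x)\<^sup>2)"
      have I': "integral\<^sup>L M (\<lambda>x. (u (int k1 - int i1) x)\<^sup>2) = I" unfolding I_def n1_def ..
      have L: "integral\<^sup>L M (\<lambda>x. (\<alpha> i1 * e i1 n1 x * u n1 x) * (\<alpha> i2 * e i2 n1 x * u n1 x)) = \<alpha> i1 * \<alpha> i2 * (- (p i1 * p i2)) * I"
        using S[OF i1 i2, of n1] ne unfolding I_def by simp
      have kd1: "kdelta (n1 - n2) = 1" using 1 by (simp add: kdelta_def)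
      show ?thesis unfolding eq kd 1[symmetric] L I' by (simp add: kdelta_def algebra_simps)
    next
      case 2
      then show ?thesis unfolding eq kd using Z[OF 2 i1 i2] by (simp add: kdelta_def)
    next
      case 3
      then show ?thesis unfolding eq kd using Z[OF 3 i2 i1] swap[of "\<lambda>x. \<alpha> i1 * e i1 n1 x * u n1 x" "\<lambda>x. \<alpha> i2 * e i2 n2 x * u n2 x"] by (simp add: kdelta_def)
    qed
  qed
qed

end
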